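(* Let $1/2<\alpha<1$, $\omega^\alpha_+(x)=\frac{1}{|x|\,|\log|x||^\alpha}\chi_{B^+(0;1/3)}(x)$ on $\mathbb{R}^2$, and $u^\alpha_+=K\ast\omega^\alpha_+$. Then $u^\alpha_+$ is unbounded. If moreover $1/2<\alpha\le2/3$, then $u^\alpha_+|\omega^\alpha_+|^2$ is not locally integrable.
   Context: $B^+(0;1/3)=\{x\in\mathbb{R}^2:|x|<1/3,\ x_2>0\}$; $\chi_E$ is the characteristic function of $E$. $K(x)=\frac{x^\perp}{2\pi|x|^2}$, $(x_1,x_2)^\perp=(-x_2,x_1)$, is the Biot–Savart kernel. The paper defines $\omega^\alpha_+$ under the standing assumption $1/2<\alpha<1$. *)

theory Defs
  imports "HOL-Analysis.Analysis"
begin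

definition perp :: "real^2 \<Rightarrow> real^2" where
  "perp x = vector [- (x$2), x$1]"

definition BS_kernel :: "real^2 \<Rightarrow> real^2" where
  "BS_kernel x = (1 / (2 * pi * (norm x)\<^sup>2)) *\<^sub>R perp x"

definition half_ball :: "(real^2) set" where
  "half_ball = {x. norm x < 1/3 \<and> x$2 > 0}"

definition omega_plus :: "real \<Rightarrow> real^2 \<Rightarrow> real" where
  "omega_plus \<alpha> x = indicator half_ball x * (1 / (norm x * \<bar>ln (norm x)\<bar> powr \<alpha>))"

definition u_plus :: "real \<Rightarrow> real^2 \<Rightarrow> real^2" where
  "u_plus \<alpha> x = (LINT y|lborel. omega_plus \<alpha> y *\<^sub>R BS_kernel (x - y))"

end

theory Submission
  imports Defs
begin

lemma basis2: "(Basis :: (real^2) set) = {axis 1 1, axis 2 1}"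
  by (auto simp: Basis_vec_def UNIV_2)

lemma axis12: "axis (1::2) (1::real) \<noteq> axis 2 1"
  by (simp add: axis_eq_axis)

lemma prodB: "(\<Prod>b\<in>(Basis :: (real^2) set). v \<bullet> b) = v$1 * v$2"
  by (simp add: basis2 axis12 inner_axis)

lemma norm2: "norm (x::real^2) = sqrt (x$1^2 + x$2^2)"
  by (simp add: norm_vec_def L2_set_def sum_2)

definition sq :: "real \<Rightarrow> real \<Rightarrow> real \<Rightarrow> real \<Rightarrow> (real^2) set" where
  "sq a1 b1 a2 b2 = {y. a1 < y$1 \<and> y$1 < b1 \<and> a2 < y$2 \<and> y$2 < b2}"

lemma sq_box: "sq a1 b1 a2 b2 = box (vector [a1,a2]) (vector [b1,b2])"
  unfolding sq_def set_eq_iff mem_box_cart forall_2 by simp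

lemma sq_sets[measurable]: "sq a1 b1 a2 b2 \<in> sets borel"
  by (simp add: sq_box)

lemma sq_measure: "a1 \<le> b1 \<Longrightarrow> a2 \<le> b2 \<Longrightarrow> emeasure lborel (sq a1 b1 a2 b2) = ennreal ((b1-a1)*(b2-a2))"
  unfolding sq_box
  apply (subst emeasure_lborel_box_eq)
  by (simp add: basis2 inner_axis axis12 ennreal_mult)
lemma dyadic_exists:
  fixes t :: real assumes "1 < t" shows "\<exists>m::nat. 2^m < t \<and> t \<le> 2^(Suc m)"
proof -
  obtain n where n: "t < 2^n" using real_arch_pow[of 2 t] by auto
  define k where "k = (LEAST n. t \<le> (2::real)^n)"
  have k1: "t \<le> 2^k" unfolding k_def by (rule LeastI[of _ n]) (use n in auto)
  have k0: "k \<noteq> 0" using k1 assms by (cases k) auto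
  have "\<not> t \<le> 2^(k-1)" unfolding k_def
    by (rule not_less_Least) (use k0 k_def in auto)
  then show ?thesis using k1 k0 by (intro exI[of _ "k-1"]) auto
qed

lemma ennreal_term_le_suminf: fixes f :: "nat \<Rightarrow> ennreal" shows "f m \<le> suminf f"
  using sum_le_suminf[of f "{m}"] by simp

lemma ball_int:
  fixes c :: "real^2" assumes R: "R > 0"
  shows "(\<integral>\<^sup>+ y. indicator (ball c R) y * ennreal (1 / norm (y - c)) \<partial>lborel) \<le> ennreal (16*R)"
proof -
  define S where "S m = sq (c$1 - R/2^m) (c$1 + R/2^m) (c$2 - R/2^m) (c$2 + R/2^m)" for m :: nat
  have pt: "indicator (ball c R) y * ennreal (1 / norm (y - c))
      \<le> (\<Sum>m. ennreal (2^(Suc m)/R) * indicator (S m) y)" for y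
  proof (cases "y \<in> ball c R \<and> y \<noteq> c")
    case False
    then show ?thesis by (auto simp: indicator_def)
  next
    case True
    hence d0: "norm (y - c) > 0" and dR: "norm (y - c) < R" by (auto simp: dist_norm norm_minus_commute)
    obtain m where m1: "2^m < R / norm (y - c)" and m2: "R / norm (y - c) \<le> 2^(Suc m)"
      using dyadic_exists[of "R / norm (y - c)"] d0 dR by auto
    have lt: "norm (y - c) < R / 2^m" using m1 d0 by (simp add: field_simps)
    have "\<bar>(y - c)$i\<bar> \<le> norm (y - c)" for i by (rule component_le_norm_cart)
    hence "\<bar>y$i - c$i\<bar> < R / 2^m" for i using lt by (metis order_le_less_trans vector_minus_component)
    hence "\<bar>y$1 - c$1\<bar> < R / 2^m" "\<bar>y$2 - c$2\<bar> < R / 2^m" by auto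
    hence inS: "y \<in> S m" unfolding S_def sq_def by (auto simp: abs_less_iff)
    have le: "1 / norm (y - c) \<le> 2^(Suc m)/R" using m2 d0 R by (simp add: field_simps)
    have "indicator (ball c R) y * ennreal (1 / norm (y - c)) \<le> ennreal (2^(Suc m)/R) * indicator (S m) y"
      using True inS le by (simp add: indicator_def ennreal_leI)
    also have "\<dots> \<le> (\<Sum>m. ennreal (2^(Suc m)/R) * indicator (S m) y)"
      by (rule ennreal_term_le_suminf)
    finally show ?thesis .
  qed
  have "(\<integral>\<^sup>+ y. indicator (ball c R) y * ennreal (1 / norm (y - c)) \<partial>lborel)
      \<le> (\<integral>\<^sup>+ y. (\<Sum>m. ennreal (2^(Suc m)/R) * indicator (S m) y) \<partial>lborel)"
    by (rule nn_integral_mono) (rule pt)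
  also have "\<dots> = (\<Sum>m. \<integral>\<^sup>+ y. ennreal (2^(Suc m)/R) * indicator (S m) y \<partial>lborel)"
    by (rule nn_integral_suminf) (auto simp: S_def)
  also have "\<dots> = (\<Sum>m. ennreal (8*R * (1/2)^m))"
  proof (rule suminf_cong)
    fix m :: nat
    have "(\<integral>\<^sup>+ y. ennreal (2^(Suc m)/R) * indicator (S m) y \<partial>lborel) = ennreal (2^(Suc m)/R) * emeasure lborel (S m)"
      by (rule nn_integral_cmult_indicator) (simp add: S_def)
    also have "emeasure lborel (S m) = ennreal ((2*R/2^m)*(2*R/2^m))"
      unfolding S_def using R by (subst sq_measure) (auto simp: field_simps)
    also have "ennreal (2^(Suc m)/R) * ennreal ((2*R/2^m)*(2*R/2^m)) = ennreal (8*R * (1/2)^m)"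
      using R by (simp add: ennreal_mult'[symmetric] field_simps power_one_over)
    finally show "(\<integral>\<^sup>+ y. ennreal (2^(Suc m)/R) * indicator (S m) y \<partial>lborel) = ennreal (8*R * (1/2)^m)" .
  qed
  also have "\<dots> = ennreal (16*R)"
  proof (rule suminf_ennreal_eq)
    show "0 \<le> 8*R*(1/2)^m" for m :: nat using R by simp
    have "(\<lambda>m. (1/2::real)^m) sums (1/(1-1/2))" by (rule geometric_sums) simp
    from sums_mult[OF this, of "8*R"] show "(\<lambda>m. 8*R*(1/2::real)^m) sums (16*R)" by simp
  qed
  finally show ?thesis .
qed

lemma far_int:
  fixes h :: real assumes h: "h > 0"
  shows "(\<integral>\<^sup>+ y. indicator {y::real^2. 4*h < \<bar>y$1\<bar> \<and> 0 < y$2 \<and> y$2 < 2*h} y * ennreal (4*h / \<bar>y$1\<bar>^3) \<partial>lborel) \<le> ennreal (16/3)"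
proof -
  define F where "F = {y::real^2. 4*h < \<bar>y$1\<bar> \<and> 0 < y$2 \<and> y$2 < 2*h}"
  define S where "S m = sq (-(16*h*2^m)) (16*h*2^m) 0 (2*h)" for m :: nat
  define c where "c m = 1/(16*h^2*8^m)" for m :: nat
  have pt: "indicator F y * ennreal (4*h / \<bar>y$1\<bar>^3)
      \<le> (\<Sum>m. ennreal (c m) * indicator (S m) y)" for y
  proof (cases "y \<in> F")
    case False
    then show ?thesis by (auto simp: indicator_def)
  next
    case True
    hence y1: "4*h < \<bar>y$1\<bar>" and y2: "0 < y$2" "y$2 < 2*h" unfolding F_def by auto
    obtain m where m1: "2^m < \<bar>y$1\<bar>/(4*h)" and m2: "\<bar>y$1\<bar>/(4*h) \<le> 2^(Suc m)"
      using dyadic_exists[of "\<bar>y$1\<bar>/(4*h)"] y1 h by auto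
    have a1: "4*h*2^m < \<bar>y$1\<bar>" using m1 h by (simp add: field_simps)
    have a2: "\<bar>y$1\<bar> \<le> 8*h*2^m" using m2 h by (simp add: field_simps)
    have t: "8*h*2^m < 16*h*2^m" using h by simp
    have b1: "y$1 < 16*h*2^m" using a2 t abs_ge_self[of "y$1"] by linarith
    have b2: "-(16*h*2^m) < y$1" using a2 t abs_ge_minus_self[of "y$1"] by linarith
    have inS: "y \<in> S m" unfolding S_def sq_def using b1 b2 y2 by simp
    have pos: "0 < 4*h*2^m" using h by simp
    have le3: "(4*h*2^m)^3 \<le> \<bar>y$1\<bar>^3" using a1 pos by (intro power_mono) auto
    have ne: "0 < \<bar>y$1\<bar>^3 * (4*h*2^m)^3" using pos a1 by (intro mult_pos_pos) auto
    have "4*h / \<bar>y$1\<bar>^3 \<le> 4*h / (4*h*2^m)^3"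
      by (rule divide_left_mono[OF le3 _ ne]) (use h in simp)
    also have "\<dots> = c m" unfolding c_def using h
      by (simp add: field_simps power_mult_distrib) (simp add: power2_eq_square power3_eq_cube flip: power_mult_distrib)
    finally have le: "4*h / \<bar>y$1\<bar>^3 \<le> c m" .
    have "indicator F y * ennreal (4*h / \<bar>y$1\<bar>^3) \<le> ennreal (c m) * indicator (S m) y"
      using True inS le by (simp add: indicator_def ennreal_leI)
    also have "\<dots> \<le> (\<Sum>m. ennreal (c m) * indicator (S m) y)"
      by (rule ennreal_term_le_suminf)
    finally show ?thesis .
  qed
  have "(\<integral>\<^sup>+ y. indicator F y * ennreal (4*h / \<bar>y$1\<bar>^3) \<partial>lborel)
      \<le> (\<integral>\<^sup>+ y. (\<Sum>m. ennreal (c m) * indicator (S m) y) \<partial>lborel)"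
    by (rule nn_integral_mono) (rule pt)
  also have "\<dots> = (\<Sum>m. \<integral>\<^sup>+ y. ennreal (c m) * indicator (S m) y \<partial>lborel)"
    by (rule nn_integral_suminf) (auto simp: S_def)
  also have "\<dots> = (\<Sum>m. ennreal (4 * (1/4)^m))"
  proof (rule suminf_cong)
    fix m :: nat
    have "(\<integral>\<^sup>+ y. ennreal (c m) * indicator (S m) y \<partial>lborel) = ennreal (c m) * emeasure lborel (S m)"
      by (rule nn_integral_cmult_indicator) (simp add: S_def)
    also have "emeasure lborel (S m) = ennreal ((32*h*2^m)*(2*h))"
      unfolding S_def using h by (subst sq_measure) (auto simp: field_simps)
    also have "ennreal (c m) * ennreal ((32*h*2^m)*(2*h)) = ennreal (4 * (1/4)^m)"
      using h unfolding c_def by (simp add: ennreal_mult'[symmetric] field_simps power_one_over power2_eq_square)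
         (simp flip: power_mult_distrib)
    finally show "(\<integral>\<^sup>+ y. ennreal (c m) * indicator (S m) y \<partial>lborel) = ennreal (4 * (1/4)^m)" .
  qed
  also have "\<dots> = ennreal (16/3)"
  proof (rule suminf_ennreal_eq)
    show "0 \<le> 4*(1/4::real)^m" for m :: nat by simp
    have "(\<lambda>m. (1/4::real)^m) sums (1/(1-1/4))" by (rule geometric_sums) simp
    from sums_mult[OF this, of "4"] show "(\<lambda>m. 4*(1/4::real)^m) sums (16/3)" by simp
  qed
  finally show ?thesis unfolding F_def .
qed

lemma perp_components[simp]: "perp x $ 1 = - (x$2)" "perp x $ 2 = x$1"
  by (simp_all add: perp_def)

lemma norm_perp[simp]: "norm (perp x) = norm x"
  by (simp add: norm2)

lemma linear_perp: "linear perp"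
  by (rule linearI) (simp_all add: vec_eq_iff forall_2)

lemma perp_measurable[measurable]: "perp \<in> borel_measurable borel"
  by (intro borel_measurable_continuous_onI linear_continuous_on linear_conv_bounded_linear[THEN iffD1] linear_perp)

lemma half_ball_sets[measurable]: "half_ball \<in> sets borel"
  unfolding half_ball_def by measurable

lemma norm_BS: "norm (BS_kernel v) = 1 / (2*pi*norm v)"
  by (simp add: BS_kernel_def power2_eq_square)

lemma meas_integrand[measurable]:
  "(\<lambda>y. omega_plus \<alpha> y *\<^sub>R BS_kernel (x - y)) \<in> borel_measurable borel"
  unfolding omega_plus_def BS_kernel_def by measurable

lemma omega_nonneg: "0 \<le> omega_plus \<alpha> y"
  by (simp add: omega_plus_def)

lemma ln_third: "1 \<le> ln (3::real)"
  using exp_le by (metis exp_le_cancel_iff exp_ln zero_less_numeral)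

lemma omega_upper:
  assumes "0 \<le> \<alpha>"
  shows "omega_plus \<alpha> y \<le> indicator (ball 0 (1/3)) y * (1 / norm y)"
proof (cases "y \<in> half_ball")
  case False thus ?thesis by (simp add: omega_plus_def)
next
  case True
  hence n: "norm y < 1/3" "0 < y$2" by (auto simp: half_ball_def)
  have n0: "0 < norm y" using n(2) component_le_norm_cart[of y 2] by linarith
  have "ln (norm y) < ln (1/3)" using n n0 by simp
  hence "1 \<le> \<bar>ln (norm y)\<bar>" using ln_third by (simp add: ln_div)
  hence "1 \<le> \<bar>ln (norm y)\<bar> powr \<alpha>" using assms by (intro ge_one_powr_ge_zero) auto
  hence "1 / (norm y * \<bar>ln (norm y)\<bar> powr \<alpha>) \<le> 1 / norm y" using n0
    by (intro divide_left_mono) (auto intro!: mult_pos_pos)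
  then show ?thesis using True n n0 by (simp add: omega_plus_def dist_norm)
qed


lemma ball_int':
  fixes c :: "real^2" assumes R: "R > 0"
  shows "(\<integral>\<^sup>+ y. ennreal (indicator (ball c R) y / norm (y - c)) \<partial>lborel) \<le> ennreal (16*R)"
proof -
  have "(\<integral>\<^sup>+ y. ennreal (indicator (ball c R) y / norm (y - c)) \<partial>lborel)
     = (\<integral>\<^sup>+ y. indicator (ball c R) y * ennreal (1 / norm (y - c)) \<partial>lborel)"
    by (rule nn_integral_cong) (simp split: split_indicator)
  also have "\<dots> \<le> ennreal (16*R)" by (rule ball_int[OF R])
  finally show ?thesis .
qed

lemma recip_prod_le:
  fixes a b n :: real
  assumes "0 < a" "0 < b" "0 < n" "n \<le> a + b"
  shows "1/(a*b) \<le> (1/a + 1/b)/n"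
proof -
  have "(1/a + 1/b)/n = (a+b)/(a*b*n)" using assms by (simp add: field_simps)
  also have "\<dots> \<ge> n/(a*b*n)" using assms by (intro divide_right_mono) auto
  finally show ?thesis using assms by simp
qed

lemma meas_integrand_l[measurable]:
  "(\<lambda>y. omega_plus \<alpha> y *\<^sub>R BS_kernel (x - y)) \<in> borel_measurable lborel"
  using meas_integrand by (simp add: measurable_lborel1)

lemma ball_sets[measurable]: "ball (c::real^2) r \<in> sets borel"
  by (simp add: borel_open)

lemma integrable_at:
  fixes x :: "real^2"
  assumes a: "0 \<le> \<alpha>" and x0: "x \<noteq> 0" and x1: "norm x < 2/3"
  shows "integrable lborel (\<lambda>y. omega_plus \<alpha> y *\<^sub>R BS_kernel (x - y))"
proof -
  define c where "c = 1/(2*pi*norm x)"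
  have nx: "0 < norm x" using x0 by simp
  have c0: "0 \<le> c" unfolding c_def using nx by simp
  have pt: "norm (omega_plus \<alpha> y *\<^sub>R BS_kernel (x - y))
      \<le> c * (indicator (ball 0 (1/3)) y / norm (y - 0) + indicator (ball x 1) y / norm (y - x))" for y
  proof -
    have lhs: "norm (omega_plus \<alpha> y *\<^sub>R BS_kernel (x - y)) = omega_plus \<alpha> y * (1/(2*pi*norm (x-y)))"
      using omega_nonneg[of \<alpha> y] by (simp add: norm_BS)
    have rhs0: "0 \<le> c * (indicator (ball 0 (1/3)) y / norm (y - 0) + indicator (ball x 1) y / norm (y - x))"
      using c0 by (intro mult_nonneg_nonneg add_nonneg_nonneg) auto
    show ?thesis
    proof (cases "y \<in> half_ball \<and> y \<noteq> x")
      case False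
      hence "y \<notin> half_ball \<or> y = x" by blast
      then show ?thesis
      proof
        assume "y \<notin> half_ball"
        hence "omega_plus \<alpha> y = 0" by (simp add: omega_plus_def)
        thus ?thesis using lhs rhs0 by simp
      next
        assume "y = x"
        thus ?thesis using rhs0 by (simp add: BS_kernel_def)
      qed
    next
      case True
      hence yb: "norm y < 1/3" "0 < y$2" "y \<noteq> x" by (auto simp: half_ball_def)
      have ny: "0 < norm y" using yb(2) component_le_norm_cart[of y 2] by linarith
      have nxy: "0 < norm (x - y)" using yb(3) by simp
      have tri: "norm x \<le> norm y + norm (x - y)" by (metis norm_triangle_sub add.commute)
      have b1: "y \<in> ball 0 (1/3)" using yb by (simp add: dist_norm)
      have "norm (y - x) \<le> norm y + norm x" by (rule norm_triangle_ineq4)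
      hence b2: "y \<in> ball x 1" using yb x1 by (simp add: dist_norm norm_minus_commute)
      have om: "omega_plus \<alpha> y \<le> 1 / norm y" using omega_upper[OF a, of y] b1 by simp
      have "omega_plus \<alpha> y * (1/(2*pi*norm (x-y))) \<le> (1/norm y) * (1/(2*pi*norm (x-y)))"
        using om nxy by (intro mult_right_mono) auto
      also have "\<dots> = (1/(2*pi)) * (1/(norm y * norm (x-y)))" by simp
      also have "\<dots> \<le> (1/(2*pi)) * ((1/norm y + 1/norm (x-y))/norm x)"
        using recip_prod_le[OF ny nxy nx tri] by (intro mult_left_mono) auto
      also have "\<dots> = c * (indicator (ball 0 (1/3)) y / norm (y - 0) + indicator (ball x 1) y / norm (y - x))"
        using b1 b2 unfolding c_def by (simp add: norm_minus_commute field_simps)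
      finally show ?thesis using lhs by simp
    qed
  qed
  have "(\<integral>\<^sup>+ y. ennreal (norm (omega_plus \<alpha> y *\<^sub>R BS_kernel (x - y))) \<partial>lborel)
     \<le> (\<integral>\<^sup>+ y. ennreal c * (ennreal (indicator (ball 0 (1/3)) y / norm (y - 0)) + ennreal (indicator (ball x 1) y / norm (y - x))) \<partial>lborel)"
  proof (rule nn_integral_mono)
    fix y
    have "ennreal (norm (omega_plus \<alpha> y *\<^sub>R BS_kernel (x - y)))
       \<le> ennreal (c * (indicator (ball 0 (1/3)) y / norm (y - 0) + indicator (ball x 1) y / norm (y - x)))"
      by (rule ennreal_leI[OF pt])
    also have "\<dots> = ennreal c * (ennreal (indicator (ball 0 (1/3)) y / norm (y - 0)) + ennreal (indicator (ball x 1) y / norm (y - x)))"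
      using c0 by (simp add: ennreal_mult ennreal_plus del: diff_0_right)
    finally show "ennreal (norm (omega_plus \<alpha> y *\<^sub>R BS_kernel (x - y)))
       \<le> ennreal c * (ennreal (indicator (ball 0 (1/3)) y / norm (y - 0)) + ennreal (indicator (ball x 1) y / norm (y - x)))" .
  qed
  also have "\<dots> = ennreal c * ((\<integral>\<^sup>+ (y::real^2). ennreal (indicator (ball 0 (1/3)) y / norm (y - 0)) \<partial>lborel)
       + (\<integral>\<^sup>+ y. ennreal (indicator (ball x 1) y / norm (y - x)) \<partial>lborel))"
  proof -
    have m1: "(\<lambda>y::real^2. ennreal (indicator (ball 0 (1/3)) y / norm (y - 0))) \<in> borel_measurable lborel"
      by (intro measurable_compose[OF _ measurable_ennreal] borel_measurable_divide borel_measurable_indicator borel_measurable_norm)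
         (auto simp: borel_open intro: borel_measurable_continuous_onI continuous_intros)
    have m2: "(\<lambda>y. ennreal (indicator (ball x 1) y / norm (y - x))) \<in> borel_measurable lborel"
      by (intro measurable_compose[OF _ measurable_ennreal] borel_measurable_divide borel_measurable_indicator borel_measurable_norm)
         (auto simp: borel_open intro: borel_measurable_continuous_onI continuous_intros)
    have m3: "(\<lambda>y::real^2. ennreal (indicator (ball 0 (1/3)) y / norm (y - 0)) + ennreal (indicator (ball x 1) y / norm (y - x))) \<in> borel_measurable lborel"
      using m1 m2 by (rule borel_measurable_add)
    show ?thesis using nn_integral_cmult[OF m3, of c] nn_integral_add[OF m1 m2] by simp
  qed
  also have "\<dots> \<le> ennreal c * (ennreal (16*(1/3)) + ennreal (16*1))"
    by (intro mult_left_mono add_mono ball_int') auto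
  also have "\<dots> < \<infinity>" by (simp add: ennreal_mult_less_top)
  finally have fin: "(\<integral>\<^sup>+ y. ennreal (norm (omega_plus \<alpha> y *\<^sub>R BS_kernel (x - y))) \<partial>lborel) < \<infinity>" .
  show ?thesis by (rule integrableI_bounded[OF meas_integrand_l fin])
qed


definition P :: "nat \<Rightarrow> (real^2) set" where
  "P k = sq 0 (1/2^k) (1/2^k) (2/2^k)"

lemma P_sets[measurable]: "P k \<in> sets borel"
  by (simp add: P_def)

lemma P_measure: "emeasure lborel (P k) = ennreal ((1/2^k)^2)"
proof -
  have "1/2^k \<le> (2::real)/2^k" by (intro divide_right_mono) auto
  thus ?thesis unfolding P_def by (subst sq_measure) (auto simp: power2_eq_square)
qed

lemma P_mem: "y \<in> P k \<longleftrightarrow> 0 < y$1 \<and> y$1 < 1/2^k \<and> 1/2^k < y$2 \<and> y$2 < 2/2^k"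
  by (simp add: P_def sq_def)

lemma P_norm:
  assumes "y \<in> P k"
  shows "1/2^k < norm y" "norm y < 3/2^k" "(norm y)^2 < 5*(1/2^k)^2"
proof -
  define g :: real where "g = 1/2^k"
  have g0: "0 < g" unfolding g_def by simp
  have y: "0 < y$1" "y$1 < g" "g < y$2" "y$2 < 2*g" using assms unfolding P_mem g_def by auto
  have "y$2 \<le> norm y" using component_le_norm_cart[of y 2] by simp
  thus "1/2^k < norm y" using y unfolding g_def by linarith
  have "y$1^2 < g^2" using y by (intro power_strict_mono) auto
  moreover have "y$2^2 < (2*g)^2" using y g0 by (intro power_strict_mono) auto
  ultimately have s: "y$1^2 + y$2^2 < 5*g^2" by (simp add: power_mult_distrib)
  have nsq: "(norm y)^2 = y$1^2 + y$2^2" by (simp add: norm2)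
  thus "(norm y)^2 < 5*(1/2^k)^2" using s unfolding g_def by simp
  have "5*g^2 < (3*g)^2" using g0 by (simp add: power_mult_distrib)
  hence "(norm y)^2 < (3*g)^2" using s nsq by linarith
  hence "norm y < 3*g" by (rule power2_less_imp_less) (use g0 in simp)
  thus "norm y < 3/2^k" unfolding g_def by simp
qed

lemma P_half_ball:
  assumes "y \<in> P k" "3 \<le> k"
  shows "y \<in> half_ball"
proof -
  have "(2::real)^3 \<le> 2^k" using assms(2) by (intro power_increasing) auto
  hence "(8::real) \<le> 2^k" by simp
  hence g: "1/2^k \<le> (1/8::real)" by (rule divide_left_mono) auto
  define T :: real where "T = (1/2^k)^2"
  have "T \<le> (1/8)*(1/8)" unfolding T_def power2_eq_square using g by (intro mult_mono) auto
  moreover have "(norm y)^2 < 5*T" using P_norm(3)[OF assms(1)] unfolding T_def .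
  moreover have "(1/3::real)^2 = 1/9" by (simp add: power2_eq_square)
  ultimately have "(norm y)^2 < (1/3)^2" by linarith
  hence "norm y < 1/3" by (rule power2_less_imp_less) simp
  moreover have "0 < y$2" using assms(1) unfolding P_mem by (meson less_trans divide_pos_pos zero_less_one zero_less_power zero_less_numeral)
  ultimately show ?thesis by (simp add: half_ball_def)
qed

lemma omega_P_lower:
  assumes y: "y \<in> P j" and j: "3 \<le> j" and a: "0 \<le> \<alpha>"
  shows "2^j / (3 * real j powr \<alpha>) \<le> omega_plus \<alpha> y"
proof -
  have hb: "y \<in> half_ball" by (rule P_half_ball[OF y j])
  have n1: "1/2^j < norm y" and n2: "norm y < 3/2^j" using P_norm[OF y] by auto
  have n1': "norm y < 1" using hb by (simp add: half_ball_def)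
  have n0: "0 < norm y" using n1 by (smt (verit) divide_pos_pos zero_less_power zero_less_numeral)
  have ln0: "ln (norm y) < 0" using n0 n1' by simp
  have "ln (1/2^j) < ln (norm y)" using n1 n0 by (subst ln_less_cancel_iff) auto
  hence "\<bar>ln (norm y)\<bar> < real j * ln 2" using ln0 by (simp add: ln_div ln_realpow)
  also have "\<dots> \<le> real j" using ln_2_less_1 by (simp add: mult_left_le)
  finally have lnj: "\<bar>ln (norm y)\<bar> \<le> real j" by simp
  have pw: "\<bar>ln (norm y)\<bar> powr \<alpha> \<le> real j powr \<alpha>" using lnj a by (intro powr_mono2) auto
  have pw0: "0 < \<bar>ln (norm y)\<bar> powr \<alpha>" using ln0 by simp
  have le: "norm y * \<bar>ln (norm y)\<bar> powr \<alpha> \<le> (3/2^j) * real j powr \<alpha>"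
    using n2 pw pw0 n0 by (intro mult_mono) auto
  have jp: "0 < real j powr \<alpha>" using j by simp
  have pos: "0 < ((3/2^j) * real j powr \<alpha>) * (norm y * \<bar>ln (norm y)\<bar> powr \<alpha>)"
    using n0 pw0 jp by (intro mult_pos_pos) auto
  have "1 / ((3/2^j) * real j powr \<alpha>) \<le> 1 / (norm y * \<bar>ln (norm y)\<bar> powr \<alpha>)"
    by (rule divide_left_mono[OF le _ pos]) simp
  thus ?thesis using hb by (simp add: omega_plus_def)
qed


lemma norm_sq2: "(norm (v::real^2))^2 = (v$1)^2 + (v$2)^2"
  by (simp add: norm2)

lemma G_pos_lower:
  assumes x: "x \<in> P k" and y: "y \<in> P j" and j: "3 \<le> j" and jk: "j + 2 \<le> k" and a: "0 \<le> \<alpha>"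
  shows "(2^j)^2 / (30 * real j powr \<alpha>) \<le> omega_plus \<alpha> y * (y$2 - x$2) / (norm (x - y))^2"
proof -
  define g :: real where "g = 1/2^j"
  define h :: real where "h = 1/2^k"
  have g0: "0 < g" unfolding g_def by simp
  have h0: "0 < h" unfolding h_def by simp
  have "(2::real)^(j+2) \<le> 2^k" using jk by (intro power_increasing) auto
  hence "4 * 2^j \<le> (2::real)^k" by (simp add: power_add)
  hence hg: "4*h \<le> g" unfolding g_def h_def by (simp add: field_simps)
  have xx: "0 < x$1" "x$1 < h" "h < x$2" "x$2 < 2*h" using x unfolding P_mem h_def by auto
  have yy: "0 < y$1" "y$1 < g" "g < y$2" "y$2 < 2*g" using y unfolding P_mem g_def by auto
  have num: "g/2 \<le> y$2 - x$2" using xx yy hg by linarith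
  have d1: "\<bar>(x - y)$1\<bar> < g" using xx yy hg by auto
  have d2: "\<bar>(x - y)$2\<bar> < 2*g" using xx yy hg by auto
  have "((x - y)$1)^2 < g^2" using d1 by (metis abs_ge_zero power2_abs power_strict_mono zero_less_numeral)
  moreover have "((x - y)$2)^2 < (2*g)^2" using d2 by (metis abs_ge_zero power2_abs power_strict_mono zero_less_numeral)
  ultimately have den: "(norm (x - y))^2 \<le> 5*g^2" unfolding norm_sq2 by (simp add: power_mult_distrib)
  have "x \<noteq> y" using num g0 by auto
  hence den0: "0 < (norm (x - y))^2" by simp
  have ratio: "(g/2) / (5*g^2) \<le> (y$2 - x$2) / (norm (x - y))^2"
    using num den den0 g0 by (intro frac_le) auto
  have om: "1/(3*g*real j powr \<alpha>) \<le> omega_plus \<alpha> y"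
    using omega_P_lower[OF y j a] unfolding g_def by simp
  have pj: "0 < real j powr \<alpha>" using j by simp
  have "(1/(3*g*real j powr \<alpha>)) * ((g/2) / (5*g^2)) \<le> omega_plus \<alpha> y * ((y$2 - x$2) / (norm (x - y))^2)"
    using om ratio g0 pj omega_nonneg[of \<alpha> y] by (intro mult_mono) auto
  moreover have "(1/(3*g*real j powr \<alpha>)) * ((g/2) / (5*g^2)) = (2^j)^2 / (30 * real j powr \<alpha>)"
    unfolding g_def using pj by (simp add: field_simps power2_eq_square)
  ultimately show ?thesis by simp
qed

lemma G_neg_upper:
  assumes x: "x \<in> P k" and k: "3 \<le> k" and a: "0 \<le> \<alpha>"
  defines "h \<equiv> 1/2^k"
  shows "- (omega_plus \<alpha> y * (y$2 - x$2) / (norm (x - y))^2)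
     \<le> (1/h) * (indicator (ball 0 (5*h)) y / norm (y - 0) + indicator (ball x (6*h)) y / norm (y - x))
        + indicator {y::real^2. 4*h < \<bar>y$1\<bar> \<and> 0 < y$2 \<and> y$2 < 2*h} y * (4*h / \<bar>y$1\<bar>^3)"
    (is "?L \<le> ?R")
proof -
  have h0: "0 < h" unfolding h_def by simp
  have xx: "0 < x$1" "x$1 < h" "h < x$2" "x$2 < 2*h" using x unfolding P_mem h_def by auto
  have R0: "0 \<le> ?R" using h0
    by (intro add_nonneg_nonneg mult_nonneg_nonneg) auto
  show ?thesis
  proof (cases "y \<in> half_ball \<and> y$2 < x$2")
    case False
    hence "omega_plus \<alpha> y = 0 \<or> x$2 \<le> y$2" by (auto simp: omega_plus_def)
    hence "?L \<le> 0"
    proof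
      assume "omega_plus \<alpha> y = 0" thus ?thesis by simp
    next
      assume "x$2 \<le> y$2"
      thus ?thesis using omega_nonneg[of \<alpha> y] by (simp add: divide_nonneg_nonneg)
    qed
    thus ?thesis using R0 by linarith
  next
    case True
    hence yb: "norm y < 1/3" "0 < y$2" "y$2 < x$2" by (auto simp: half_ball_def)
    have ny: "0 < norm y" using yb(2) component_le_norm_cart[of y 2] by linarith
    have yx: "y \<noteq> x" using yb by auto
    have nxy: "0 < norm (x - y)" using yx by simp
    have om: "omega_plus \<alpha> y \<le> 1 / norm y"
      using omega_upper[OF a, of y] yb by (simp add: dist_norm)
    have om0: "0 \<le> omega_plus \<alpha> y" by (rule omega_nonneg)
    have c2: "x$2 - y$2 \<le> norm (x - y)" using component_le_norm_cart[of "x - y" 2] by simp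
    have L_eq: "?L = omega_plus \<alpha> y * (x$2 - y$2) / (norm (x - y))^2"
      by (subst minus_divide_left) (simp add: algebra_simps)
    show ?thesis
    proof (cases "\<bar>y$1\<bar> \<le> 4*h")
      case True
      have "?L \<le> omega_plus \<alpha> y * norm (x - y) / (norm (x - y))^2"
        unfolding L_eq using c2 om0 nxy by (intro divide_right_mono mult_left_mono) auto
      also have "\<dots> = omega_plus \<alpha> y * (1 / norm (x - y))" using nxy by (simp add: power2_eq_square)
      also have "\<dots> \<le> (1 / norm y) * (1 / norm (x - y))" using om nxy by (intro mult_right_mono) auto
      also have "\<dots> = 1 / (norm y * norm (x - y))" by simp
      also have "\<dots> \<le> (1/norm y + 1/norm (x - y)) / norm x"
      proof (rule recip_prod_le[OF ny nxy])
        show "0 < norm x" using xx component_le_norm_cart[of x 2] by linarith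
        show "norm x \<le> norm y + norm (x - y)" by (metis norm_triangle_sub add.commute)
      qed
      also have "\<dots> \<le> (1/norm y + 1/norm (x - y)) / h"
      proof (rule divide_left_mono)
        show "h \<le> norm x" using xx component_le_norm_cart[of x 2] by linarith
        show "0 \<le> 1/norm y + 1/norm (x - y)" by simp
        show "0 < norm x * h" using h0 xx component_le_norm_cart[of x 2] by (intro mult_pos_pos) linarith+
      qed
      also have "\<dots> = (1/h) * (indicator (ball 0 (5*h)) y / norm (y - 0) + indicator (ball x (6*h)) y / norm (y - x))"
      proof -
        have "(norm y)^2 < (5*h)^2"
        proof -
          have "(y$1)^2 \<le> (4*h)^2" using True by (metis abs_ge_zero power2_abs power_mono)
          moreover have "(y$2)^2 < (2*h)^2" using yb xx by (intro power_strict_mono) auto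
          moreover have "(4*h)^2 = 16*h^2" "(2*h)^2 = 4*h^2" "(5*h)^2 = 25*h^2" by (simp_all add: power_mult_distrib)
          moreover have "0 < h^2" using h0 by simp
          ultimately show ?thesis unfolding norm_sq2 by linarith
        qed
        hence "norm y < 5*h" by (rule power2_less_imp_less) (use h0 in simp)
        hence i1: "y \<in> ball 0 (5*h)" by (simp add: dist_norm)
        have "(norm (x - y))^2 < (6*h)^2"
        proof -
          have "\<bar>(x - y)$1\<bar> \<le> 5*h" using True xx by auto
          hence "((x - y)$1)^2 \<le> (5*h)^2" by (metis abs_ge_zero power2_abs power_mono)
          moreover have "\<bar>(x - y)$2\<bar> < 2*h" using yb xx by auto
          hence "((x - y)$2)^2 < (2*h)^2" by (metis abs_ge_zero power2_abs power_strict_mono zero_less_numeral)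
          moreover have "(6*h)^2 = 36*h^2" "(2*h)^2 = 4*h^2" "(5*h)^2 = 25*h^2" by (simp_all add: power_mult_distrib)
          moreover have "0 < h^2" using h0 by simp
          ultimately show ?thesis unfolding norm_sq2 by linarith
        qed
        hence "norm (x - y) < 6*h" by (rule power2_less_imp_less) (use h0 in simp)
        hence i2: "y \<in> ball x (6*h)" by (simp add: dist_norm)
        show ?thesis using i1 i2 by (simp add: norm_minus_commute field_simps)
      qed
      also have "\<dots> \<le> ?R"
      proof -
        have "0 \<le> indicator {y::real^2. 4*h < \<bar>y$1\<bar> \<and> 0 < y$2 \<and> y$2 < 2*h} y * (4*h / \<bar>y$1\<bar>^3)"
          using h0 by (intro mult_nonneg_nonneg) auto
        thus ?thesis by linarith
      qed
      finally show ?thesis .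
    next
      case False
      hence far: "4*h < \<bar>y$1\<bar>" by simp
      have inF: "y \<in> {y::real^2. 4*h < \<bar>y$1\<bar> \<and> 0 < y$2 \<and> y$2 < 2*h}" using far yb xx by auto
      have a1: "0 < \<bar>y$1\<bar>" using far h0 by linarith
      have "(3/4)*\<bar>y$1\<bar> \<le> \<bar>(x - y)$1\<bar>"
      proof -
        have "\<bar>y$1\<bar> - \<bar>x$1\<bar> \<le> \<bar>y$1 - x$1\<bar>" by (rule abs_triangle_ineq2)
        moreover have "\<bar>y$1 - x$1\<bar> = \<bar>(x - y)$1\<bar>" by (simp add: abs_minus_commute)
        moreover have "\<bar>x$1\<bar> < h" using xx by simp
        ultimately show ?thesis using far by linarith
      qed
      also have "\<dots> \<le> norm (x - y)" by (rule component_le_norm_cart)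
      finally have c34: "(3/4)*\<bar>y$1\<bar> \<le> norm (x - y)" .
      have "((3/4)*\<bar>y$1\<bar>)^2 \<le> (norm (x - y))^2" using c34 a1 by (intro power_mono) auto
      moreover have "((3/4)*\<bar>y$1\<bar>)^2 = (9/16)*\<bar>y$1\<bar>^2" by (simp add: power_mult_distrib power2_eq_square)
      moreover have "0 \<le> \<bar>y$1\<bar>^2" by simp
      ultimately have dd: "\<bar>y$1\<bar>^2 / 2 \<le> (norm (x - y))^2" by linarith
      have ny1: "\<bar>y$1\<bar> \<le> norm y" by (rule component_le_norm_cart)
      have "?L \<le> omega_plus \<alpha> y * (2*h) / (norm (x - y))^2"
        unfolding L_eq using yb xx om0 nxy by (intro divide_right_mono mult_left_mono) auto
      also have "\<dots> \<le> (1/\<bar>y$1\<bar>) * (2*h) / (\<bar>y$1\<bar>^2 / 2)"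
      proof (intro frac_le mult_right_mono)
        show "omega_plus \<alpha> y \<le> 1/\<bar>y$1\<bar>" using om ny1 a1 by (meson order_trans divide_left_mono zero_le_one mult_pos_pos ny)
      qed (use om0 h0 a1 dd in auto)
      also have "\<dots> = 4*h / \<bar>y$1\<bar>^3" using a1 by (simp add: field_simps power2_eq_square power3_eq_cube)
      also have "\<dots> \<le> ?R" using inF h0 by (simp add: add_nonneg_nonneg)
      finally show ?thesis .
    qed
  qed
qed


lemma P_disj: "y \<in> P j \<Longrightarrow> y \<in> P j' \<Longrightarrow> j = j'"
proof (rule ccontr)
  assume y: "y \<in> P j" "y \<in> P j'" and ne: "j \<noteq> j'"
  have key: "\<not> (y \<in> P a \<and> y \<in> P b)" if ab: "a < b" for a b
  proof
    assume "y \<in> P a \<and> y \<in> P b"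
    hence "1/2^a < y$2" "y$2 < 2/2^b" unfolding P_mem by auto
    moreover have "(2::real)^(Suc a) \<le> 2^b" using ab by (intro power_increasing) auto
    hence "2/2^b \<le> (1::real)/2^a" by (simp add: field_simps)
    ultimately show False by linarith
  qed
  show False using ne y key[of j j'] key[of j' j] by (cases "j < j'") auto
qed

lemma F_sets[measurable]: "{y::real^2. c < \<bar>y$1\<bar> \<and> 0 < y$2 \<and> y$2 < d} \<in> sets borel"
  by measurable

lemma u1_lower:
  assumes x: "x \<in> P k" and k: "4 \<le> k" and a: "0 \<le> \<alpha>"
  shows "integrable lborel (\<lambda>y. omega_plus \<alpha> y *\<^sub>R BS_kernel (x - y))"
    and "(\<Sum>j\<in>{3..k-2}. 1/(30 * real j powr \<alpha>)) - 182 \<le> 2*pi * (u_plus \<alpha> x $ 1)"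
proof -
  define h :: real where "h = 1/2^k"
  have h0: "0 < h" unfolding h_def by simp
  have nx: "norm x < 3/2^k" "1/2^k < norm x" using P_norm[OF x] by auto
  have "(3::real)/2^k \<le> 3/2^4" using k by (intro divide_left_mono power_increasing) auto
  hence x23: "norm x < 2/3" using nx by simp
  have x0: "x \<noteq> 0" using nx(2) by (auto simp: le_less_trans)
  show int: "integrable lborel (\<lambda>y. omega_plus \<alpha> y *\<^sub>R BS_kernel (x - y))"
    by (rule integrable_at[OF a x0 x23])
  define G where "G y = omega_plus \<alpha> y * (y$2 - x$2) / (norm (x - y))^2" for y
  have Geq: "2*pi * (omega_plus \<alpha> y *\<^sub>R BS_kernel (x - y)) $ 1 = G y" for y
    unfolding G_def BS_kernel_def by (cases "x = y") (simp_all add: field_simps)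
  have int1: "integrable lborel (\<lambda>y. (omega_plus \<alpha> y *\<^sub>R BS_kernel (x - y)) $ 1)"
    by (rule integrable_bounded_linear[OF bounded_linear_vec_nth int])
  have intG: "integrable lborel G"
    using integrable_mult_right[OF int1, of "2*pi"] unfolding Geq[symmetric] by simp
  have uG: "2*pi * (u_plus \<alpha> x $ 1) = (LINT y|lborel. G y)"
  proof -
    have "u_plus \<alpha> x $ 1 = (LINT y|lborel. (omega_plus \<alpha> y *\<^sub>R BS_kernel (x - y)) $ 1)"
      unfolding u_plus_def by (rule integral_bounded_linear[OF bounded_linear_vec_nth int, symmetric])
    hence "2*pi * (u_plus \<alpha> x $ 1) = (LINT y|lborel. 2*pi * (omega_plus \<alpha> y *\<^sub>R BS_kernel (x - y)) $ 1)"
      by simp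
    thus ?thesis unfolding Geq .
  qed
  have fin: "(\<integral>\<^sup>+ y. ennreal (G y) \<partial>lborel) \<noteq> \<infinity>" "(\<integral>\<^sup>+ y. ennreal (- G y) \<partial>lborel) \<noteq> \<infinity>"
    using intG unfolding real_integrable_def by auto
  define J where "J = {3..k-2}"
  define L where "L = (\<Sum>j\<in>J. 1/(30 * real j powr \<alpha>))"
  define c where "c j = (2^j)^2 / (30 * real j powr \<alpha>)" for j :: nat
  have c0: "0 \<le> c j" for j unfolding c_def by simp
  have pos: "ennreal L \<le> (\<integral>\<^sup>+ y. ennreal (G y) \<partial>lborel)"
  proof -
    have "(\<integral>\<^sup>+ y. (\<Sum>j\<in>J. ennreal (c j) * indicator (P j) y) \<partial>lborel)
        = (\<Sum>j\<in>J. \<integral>\<^sup>+ y. ennreal (c j) * indicator (P j) y \<partial>lborel)"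
      by (rule nn_integral_sum) auto
    also have "\<dots> = (\<Sum>j\<in>J. ennreal (1/(30 * real j powr \<alpha>)))"
    proof (rule sum.cong[OF refl])
      fix j assume "j \<in> J"
      have "(\<integral>\<^sup>+ y. ennreal (c j) * indicator (P j) y \<partial>lborel) = ennreal (c j) * emeasure lborel (P j)"
        by (rule nn_integral_cmult_indicator) simp
      also have "\<dots> = ennreal (c j * (1/2^j)^2)" using c0 by (simp add: P_measure ennreal_mult)
      also have "c j * (1/2^j)^2 = 1/(30 * real j powr \<alpha>)" unfolding c_def by (simp add: field_simps)
      finally show "(\<integral>\<^sup>+ y. ennreal (c j) * indicator (P j) y \<partial>lborel) = ennreal (1/(30 * real j powr \<alpha>))" .
    qed
    also have "\<dots> = ennreal L" unfolding L_def by (rule sum_ennreal) simp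
    finally have eqL: "(\<integral>\<^sup>+ y. (\<Sum>j\<in>J. ennreal (c j) * indicator (P j) y) \<partial>lborel) = ennreal L" .
    have "(\<integral>\<^sup>+ y. (\<Sum>j\<in>J. ennreal (c j) * indicator (P j) y) \<partial>lborel) \<le> (\<integral>\<^sup>+ y. ennreal (G y) \<partial>lborel)"
    proof (rule nn_integral_mono)
      fix y
      show "(\<Sum>j\<in>J. ennreal (c j) * indicator (P j) y) \<le> ennreal (G y)"
      proof (cases "\<exists>j0\<in>J. y \<in> P j0")
        case False
        hence "(\<Sum>j\<in>J. ennreal (c j) * indicator (P j) y) = 0" by (intro sum.neutral) auto
        thus ?thesis by simp
      next
        case True
        then obtain j0 where j0: "j0 \<in> J" "y \<in> P j0" by auto
        have "(\<Sum>j\<in>J. ennreal (c j) * indicator (P j) y) = ennreal (c j0) * indicator (P j0) y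
              + (\<Sum>j\<in>J - {j0}. ennreal (c j) * indicator (P j) y)"
          using j0 by (subst sum.remove[of J j0]) (auto simp: J_def)
        also have "(\<Sum>j\<in>J - {j0}. ennreal (c j) * indicator (P j) y) = 0"
          using P_disj[OF j0(2)] by (intro sum.neutral) (auto simp: indicator_def)
        also have "ennreal (c j0) * indicator (P j0) y = ennreal (c j0)" using j0 by simp
        also have "c j0 \<le> G y" unfolding c_def G_def
          by (rule G_pos_lower[OF x j0(2) _ _ a]) (use j0 k in \<open>auto simp: J_def\<close>)
        finally show ?thesis by (simp add: ennreal_leI)
      qed
    qed
    thus ?thesis using eqL by simp
  qed
  define A where "A y = ennreal (indicator (ball 0 (5*h)) y / norm (y - 0))" for y :: "real^2"
  define B where "B y = ennreal (indicator (ball x (6*h)) y / norm (y - x))" for y :: "real^2"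
  define F where "F = {y::real^2. 4*h < \<bar>y$1\<bar> \<and> 0 < y$2 \<and> y$2 < 2*h}"
  have mA: "A \<in> borel_measurable lborel" unfolding A_def
    by (intro measurable_compose[OF _ measurable_ennreal] borel_measurable_divide borel_measurable_indicator borel_measurable_norm)
       (auto simp: borel_open intro: borel_measurable_continuous_onI continuous_intros)
  have mB: "B \<in> borel_measurable lborel" unfolding B_def
    by (intro measurable_compose[OF _ measurable_ennreal] borel_measurable_divide borel_measurable_indicator borel_measurable_norm)
       (auto simp: borel_open intro: borel_measurable_continuous_onI continuous_intros)
  have mAB: "(\<lambda>y. ennreal (1/h) * (A y + B y)) \<in> borel_measurable lborel"
    using mA mB by measurable
  have mF: "(\<lambda>y. indicator F y * ennreal (4*h / \<bar>y$1\<bar>^3)) \<in> borel_measurable lborel"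
    unfolding F_def by measurable
  have neg: "(\<integral>\<^sup>+ y. ennreal (- G y) \<partial>lborel) \<le> ennreal 182"
  proof -
    have "(\<integral>\<^sup>+ y. ennreal (- G y) \<partial>lborel)
        \<le> (\<integral>\<^sup>+ y. ennreal (1/h) * (A y + B y) + indicator F y * ennreal (4*h / \<bar>y$1\<bar>^3) \<partial>lborel)"
    proof (rule nn_integral_mono)
      fix y
      have "- G y \<le> (1/h) * (indicator (ball 0 (5*h)) y / norm (y - 0) + indicator (ball x (6*h)) y / norm (y - x))
        + indicator F y * (4*h / \<bar>y$1\<bar>^3)"
        unfolding G_def F_def h_def by (rule G_neg_upper[OF x _ a]) (use k in simp)
      hence "ennreal (- G y) \<le> ennreal ((1/h) * (indicator (ball 0 (5*h)) y / norm (y - 0) + indicator (ball x (6*h)) y / norm (y - x))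
        + indicator F y * (4*h / \<bar>y$1\<bar>^3))" by (rule ennreal_leI)
      also have "\<dots> = ennreal (1/h) * (A y + B y) + indicator F y * ennreal (4*h / \<bar>y$1\<bar>^3)"
      proof -
        define aa where "aa = indicator (ball 0 (5*h)) y / norm (y - 0)"
        define bb where "bb = indicator (ball x (6*h)) y / norm (y - x)"
        define tt where "tt = indicator F y * (4*h / \<bar>y$1\<bar>^3)"
        have aa0: "0 \<le> aa" unfolding aa_def by simp
        have bb0: "0 \<le> bb" unfolding bb_def by simp
        have tt0: "0 \<le> tt" unfolding tt_def using h0 by simp
        have c0: "0 \<le> 1/h" using h0 by simp
        have "ennreal ((1/h) * (aa + bb) + tt) = ennreal ((1/h) * (aa + bb)) + ennreal tt"
          using c0 aa0 bb0 tt0 by (intro ennreal_plus) auto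
        also have "ennreal ((1/h) * (aa + bb)) = ennreal (1/h) * ennreal (aa + bb)"
          using c0 aa0 bb0 by (intro ennreal_mult) auto
        also have "ennreal (aa + bb) = ennreal aa + ennreal bb"
          using aa0 bb0 by (intro ennreal_plus) auto
        also have "ennreal tt = indicator F y * ennreal (4*h / \<bar>y$1\<bar>^3)"
          unfolding tt_def by (simp split: split_indicator)
        finally show ?thesis unfolding aa_def bb_def tt_def A_def B_def .
      qed
      finally show "ennreal (- G y) \<le> ennreal (1/h) * (A y + B y) + indicator F y * ennreal (4*h / \<bar>y$1\<bar>^3)" .
    qed
    also have "\<dots> = ennreal (1/h) * ((\<integral>\<^sup>+ y. A y \<partial>lborel) + (\<integral>\<^sup>+ y. B y \<partial>lborel))
         + (\<integral>\<^sup>+ y. indicator F y * ennreal (4*h / \<bar>y$1\<bar>^3) \<partial>lborel)"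
      by (simp add: nn_integral_add[OF mAB mF] nn_integral_cmult[OF borel_measurable_add[OF mA mB]] nn_integral_add[OF mA mB])
    also have "\<dots> \<le> ennreal (1/h) * (ennreal (16*(5*h)) + ennreal (16*(6*h))) + ennreal (16/3)"
    proof (intro add_mono mult_left_mono order.refl)
      show "(\<integral>\<^sup>+ y. A y \<partial>lborel) \<le> ennreal (16*(5*h))" unfolding A_def by (rule ball_int') (use h0 in simp)
      show "(\<integral>\<^sup>+ y. B y \<partial>lborel) \<le> ennreal (16*(6*h))" unfolding B_def by (rule ball_int') (use h0 in simp)
      show "(\<integral>\<^sup>+ y. indicator F y * ennreal (4*h / \<bar>y$1\<bar>^3) \<partial>lborel) \<le> ennreal (16/3)"
        unfolding F_def by (rule far_int[OF h0])
    qed auto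
    also have "\<dots> = ennreal (176 + 16/3)"
    proof -
      have "ennreal (16*(5*h)) + ennreal (16*(6*h)) = ennreal (16*(5*h) + 16*(6*h))"
        using h0 by (intro ennreal_plus[symmetric]) auto
      also have "ennreal (1/h) * \<dots> = ennreal ((1/h) * (16*(5*h) + 16*(6*h)))"
        using h0 by (intro ennreal_mult[symmetric]) auto
      also have "(1/h) * (16*(5*h) + 16*(6*h)) = 176" using h0 by (simp add: field_simps)
      also have "ennreal 176 + ennreal (16/3) = ennreal (176 + 16/3)"
        by (intro ennreal_plus[symmetric]) auto
      finally show ?thesis by simp
    qed
    also have "\<dots> \<le> ennreal 182" by (intro ennreal_leI) simp
    finally show ?thesis .
  qed
  have L0: "0 \<le> L" unfolding L_def by (intro sum_nonneg) simp
  have p: "L \<le> enn2real (\<integral>\<^sup>+ y. ennreal (G y) \<partial>lborel)"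
    using enn2real_mono[OF pos] fin(1) L0 by (simp add: less_top)
  have n: "enn2real (\<integral>\<^sup>+ y. ennreal (- G y) \<partial>lborel) \<le> 182"
    using enn2real_mono[OF neg] by simp
  have "(LINT y|lborel. G y) = enn2real (\<integral>\<^sup>+ y. ennreal (G y) \<partial>lborel) - enn2real (\<integral>\<^sup>+ y. ennreal (- G y) \<partial>lborel)"
    by (rule real_lebesgue_integral_def[OF intG])
  thus "(\<Sum>j\<in>{3..k-2}. 1/(30 * real j powr \<alpha>)) - 182 \<le> 2*pi * (u_plus \<alpha> x $ 1)"
    using p n uG unfolding L_def J_def by linarith
qed


lemma sum_lower:
  assumes k: "4 \<le> k" and a: "0 \<le> \<alpha>"
  shows "(real k powr (1 - \<alpha>) - 4)/30 \<le> (\<Sum>j\<in>{3..k-2}. 1/(30 * real j powr \<alpha>))"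
proof -
  have kp: "1 \<le> real k powr \<alpha>" using k a by (intro ge_one_powr_ge_zero) auto
  have allj: "\<forall>j\<in>{3..k-2}. 1/(30 * real k powr \<alpha>) \<le> 1/(30 * real j powr \<alpha>)"
  proof
    fix j assume j: "j \<in> {3..k-2}"
    have "j \<le> k" using j by simp arith
    hence "real j \<le> real k" by simp
    hence "real j powr \<alpha> \<le> real k powr \<alpha>" using a by (intro powr_mono2) auto
    hence le: "30 * real j powr \<alpha> \<le> 30 * real k powr \<alpha>" by simp
    have jp: "0 < real j powr \<alpha>" using j by simp
    have kp0: "0 < real k powr \<alpha>" using k by simp
    have pos: "0 < (30 * real k powr \<alpha>) * (30 * real j powr \<alpha>)" using jp kp0 by simp
    show "1/(30 * real k powr \<alpha>) \<le> 1/(30 * real j powr \<alpha>)"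
      by (rule divide_left_mono[OF le _ pos]) simp
  qed
  have "real (card {3..k-2}) * (1/(30 * real k powr \<alpha>)) \<le> (\<Sum>j\<in>{3..k-2}. 1/(30 * real j powr \<alpha>))"
    by (rule sum_bounded_below) (use allj in blast)
  moreover have "card {3..k-2} = k - 4" using k by simp
  moreover have "real (k - 4) = real k - 4" using k by simp
  ultimately have s: "(real k - 4) / (30 * real k powr \<alpha>) \<le> (\<Sum>j\<in>{3..k-2}. 1/(30 * real j powr \<alpha>))" by simp
  have e1: "real k powr (1 - \<alpha>) = real k / real k powr \<alpha>" using k by (simp add: powr_diff)
  have kpn: "real k powr \<alpha> \<noteq> 0" using kp by linarith
  have "(real k / real k powr \<alpha> - 4)/30 = (real k - 4 * real k powr \<alpha>) / (30 * real k powr \<alpha>)"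
    using kpn by (simp add: field_simps)
  hence "(real k powr (1 - \<alpha>) - 4)/30 = (real k - 4 * real k powr \<alpha>) / (30 * real k powr \<alpha>)"
    unfolding e1 .
  also have "\<dots> \<le> (real k - 4) / (30 * real k powr \<alpha>)"
    using kp by (intro divide_right_mono) auto
  finally show ?thesis using s by linarith
qed

lemma u1_lower2:
  assumes x: "x \<in> P k" and k: "4 \<le> k" and a: "0 \<le> \<alpha>"
  shows "(real k powr (1 - \<alpha>) - 4)/30 - 182 \<le> 2*pi * (u_plus \<alpha> x $ 1)"
  using sum_lower[OF k a] u1_lower(2)[OF x k a] by linarith

definition ptP :: "nat \<Rightarrow> real^2" where
  "ptP k = vector [1/(2*2^k), 3/(2*2^k)]"

lemma ptP_mem: "ptP k \<in> P k"
  unfolding P_mem ptP_def by (simp add: field_simps)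


lemma big_k:
  assumes a1: "\<alpha> < 1" and B: "0 < B"
  shows "\<exists>K\<ge>4. \<forall>k\<ge>K. B \<le> real k powr (1 - \<alpha>)"
proof -
  define K where "K = max 4 (nat \<lceil>B powr (1/(1-\<alpha>))\<rceil>)"
  have allk: "\<forall>k\<ge>K. B \<le> real k powr (1 - \<alpha>)"
  proof (intro allI impI)
    fix k assume kK: "K \<le> k"
    have "B powr (1/(1-\<alpha>)) \<le> real (nat \<lceil>B powr (1/(1-\<alpha>))\<rceil>)" by linarith
    also have "\<dots> \<le> real k"
    proof (rule of_nat_mono)
      show "nat \<lceil>B powr (1/(1-\<alpha>))\<rceil> \<le> k" using kK unfolding K_def by simp
    qed
    finally have "(B powr (1/(1-\<alpha>))) powr (1 - \<alpha>) \<le> real k powr (1 - \<alpha>)"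
      using a1 by (intro powr_mono2) auto
    also have "(B powr (1/(1-\<alpha>))) powr (1 - \<alpha>) = B" using a1 B by (simp add: powr_powr)
    finally show "B \<le> real k powr (1 - \<alpha>)" .
  qed
  have "4 \<le> K" unfolding K_def by simp
  thus ?thesis using allk by blast
qed

lemma part1:
  assumes a0: "0 \<le> \<alpha>" and a1: "\<alpha> < 1"
  shows "\<exists>x. integrable lborel (\<lambda>y. omega_plus \<alpha> y *\<^sub>R BS_kernel (x - y)) \<and> norm (u_plus \<alpha> x) > M"
proof -
  define B where "B = 30*(182 + 2*pi*\<bar>M\<bar> + 1) + 4"
  have B0: "0 < B" unfolding B_def by (simp add: add_pos_nonneg)
  obtain K where K: "K \<ge> 4" "\<forall>k\<ge>K. B \<le> real k powr (1 - \<alpha>)" using big_k[OF a1 B0] by auto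
  define x where "x = ptP K"
  have x: "x \<in> P K" unfolding x_def by (rule ptP_mem)
  have "(B - 4)/30 - 182 \<le> (real K powr (1 - \<alpha>) - 4)/30 - 182" using K by (intro diff_right_mono divide_right_mono) auto
  also have "\<dots> \<le> 2*pi * (u_plus \<alpha> x $ 1)" by (rule u1_lower2[OF x K(1) a0])
  finally have fB: "(B - 4)/30 - 182 \<le> 2*pi * (u_plus \<alpha> x $ 1)" .
  have "(B - 4)/30 - 182 = 2*pi*\<bar>M\<bar> + 1" unfolding B_def by (simp add: field_simps)
  hence "2*pi*\<bar>M\<bar> + 1 \<le> 2*pi * (u_plus \<alpha> x $ 1)" using fB by linarith
  hence "2*pi*\<bar>M\<bar> < 2*pi * (u_plus \<alpha> x $ 1)" by linarith
  hence "\<bar>M\<bar> < u_plus \<alpha> x $ 1" by simp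
  also have "\<dots> \<le> norm (u_plus \<alpha> x)" using component_le_norm_cart[of "u_plus \<alpha> x" 1] by linarith
  finally have "M < norm (u_plus \<alpha> x)" by linarith
  thus ?thesis using u1_lower(1)[OF x K(1) a0] by blast
qed


lemma not_summable_tail:
  fixes c :: real assumes c: "c \<noteq> 0"
  shows "\<not> summable (\<lambda>k::nat. if K \<le> k then c * inverse (real k) else 0)"
proof
  assume "summable (\<lambda>k::nat. if K \<le> k then c * inverse (real k) else 0)"
  hence "summable (\<lambda>n. (\<lambda>k::nat. if K \<le> k then c * inverse (real k) else 0) (n + K))"
    by (subst summable_iff_shift)
  hence "summable (\<lambda>n. c * inverse (real (n + K)))" by simp
  hence "summable (\<lambda>n. inverse (real (n + K)))" using c by (simp add: summable_cmult_iff)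
  hence "summable (\<lambda>n. inverse (real n))" by (subst (asm) summable_iff_shift[of "\<lambda>n. inverse (real n)"])
  thus False using not_summable_harmonic[where 'a=real] by simp
qed

lemma div_helper: "(a::real) / (c * b) = a * inverse b / c"
  by (simp add: divide_inverse mult_ac)

lemma key_P:
  assumes x: "x \<in> P k" and k: "4 \<le> k" and a0: "0 \<le> \<alpha>" and a23: "\<alpha> \<le> 2/3"
    and big: "10928 \<le> real k powr (1 - \<alpha>)"
  shows "(2^k)^2 / (1080*pi*real k) \<le> (\<bar>omega_plus \<alpha> x\<bar>)\<^sup>2 * norm (u_plus \<alpha> x)"
proof -
  define kp where "kp = real k powr (1 - \<alpha>)"
  have kpos: "0 < real k" using k by simp
  have eqk: "(kp - 4)/30 - 182 - kp/60 = (kp - 10928)/60" by (simp add: field_simps)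
  have "0 \<le> (kp - 10928)/60" using big unfolding kp_def by simp
  hence "kp/60 \<le> (kp - 4)/30 - 182" using eqk by linarith
  also have "\<dots> \<le> 2*pi * (u_plus \<alpha> x $ 1)" unfolding kp_def by (rule u1_lower2[OF x k a0])
  finally have "kp/60 \<le> 2*pi * (u_plus \<alpha> x $ 1)" .
  hence "kp/(120*pi) \<le> u_plus \<alpha> x $ 1" by (simp add: field_simps)
  also have "\<dots> \<le> norm (u_plus \<alpha> x)" using component_le_norm_cart[of "u_plus \<alpha> x" 1] by linarith
  finally have un: "kp/(120*pi) \<le> norm (u_plus \<alpha> x)" .
  define w where "w = 2^k / (3 * real k powr \<alpha>)"
  have w0: "0 \<le> w" unfolding w_def by simp
  have om: "w \<le> omega_plus \<alpha> x" unfolding w_def by (rule omega_P_lower[OF x _ a0]) (use k in simp)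
  have om2: "w^2 \<le> (\<bar>omega_plus \<alpha> x\<bar>)\<^sup>2" using om w0 by (simp add: power_mono)
  have kp0: "0 \<le> kp" unfolding kp_def by simp
  have A1: "w^2 * (kp/(120*pi)) \<le> (\<bar>omega_plus \<alpha> x\<bar>)\<^sup>2 * norm (u_plus \<alpha> x)"
    using om2 un kp0 by (intro mult_mono) auto
  have A2: "w^2 * (kp/(120*pi)) = (2^k)^2 * real k powr (1 - 3*\<alpha>) / (1080*pi)"
  proof -
    have "kp / (real k powr \<alpha>)^2 = real k powr (1 - 3*\<alpha>)"
      unfolding kp_def using kpos
      by (simp add: power2_eq_square powr_add[symmetric] powr_diff[symmetric] algebra_simps)
    thus ?thesis unfolding w_def using kpos by (simp add: field_simps power2_eq_square)
  qed
  have A3: "inverse (real k) \<le> real k powr (1 - 3*\<alpha>)"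
  proof -
    have "real k powr (-1) \<le> real k powr (1 - 3*\<alpha>)" using a23 k by (intro powr_mono) auto
    thus ?thesis using kpos by (simp add: powr_minus)
  qed
  have A4: "(2^k)^2 * inverse (real k) / (1080*pi) \<le> (2^k)^2 * real k powr (1 - 3*\<alpha>) / (1080*pi)"
    apply (rule divide_right_mono)
     apply (rule mult_left_mono[OF A3])
     apply simp
    apply simp
    done
  have A5: "(2^k)^2 / (1080*pi*real k) = (2^k)^2 * inverse (real k) / (1080*pi)"
    by (rule div_helper)
  show ?thesis using A1 A2 A4 A5 by linarith
qed


lemma part2:
  assumes a0: "0 \<le> \<alpha>" and a1: "\<alpha> < 1" and a23: "\<alpha> \<le> 2/3"
  shows "\<not> set_integrable lborel (cball 0 1) (\<lambda>x. (\<bar>omega_plus \<alpha> x\<bar>)\<^sup>2 *\<^sub>R u_plus \<alpha> x)"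
proof
  define f where "f x = indicator (cball 0 1) x *\<^sub>R ((\<bar>omega_plus \<alpha> x\<bar>)\<^sup>2 *\<^sub>R u_plus \<alpha> x)" for x :: "real^2"
  assume "set_integrable lborel (cball 0 1) (\<lambda>x. (\<bar>omega_plus \<alpha> x\<bar>)\<^sup>2 *\<^sub>R u_plus \<alpha> x)"
  hence "integrable lborel f" unfolding set_integrable_def f_def .
  hence fin: "(\<integral>\<^sup>+ x. ennreal (norm (f x)) \<partial>lborel) < \<infinity>" by (simp add: integrable_iff_bounded)
  obtain K where K: "K \<ge> 4" "\<forall>k\<ge>K. 10928 \<le> real k powr (1 - \<alpha>)" using big_k[OF a1, of 10928] by auto
  define d where "d k = (if K \<le> k then (2^k)^2 / (1080*pi*real k) else 0)" for k :: nat
  have d0: "0 \<le> d k" for k unfolding d_def by simp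
  have pt: "(\<Sum>k. ennreal (d k) * indicator (P k) x) \<le> ennreal (norm (f x))" for x
  proof (cases "\<exists>k0. x \<in> P k0")
    case False
    hence "(\<lambda>k. ennreal (d k) * indicator (P k) x) = (\<lambda>k. 0)" by auto
    thus ?thesis by simp
  next
    case True
    then obtain k0 where k0: "x \<in> P k0" by auto
    have "(\<Sum>k. ennreal (d k) * indicator (P k) x) = (\<Sum>k\<in>{k0}. ennreal (d k) * indicator (P k) x)"
      by (rule suminf_finite) (use P_disj[OF k0] in \<open>auto simp: indicator_def\<close>)
    also have "\<dots> = ennreal (d k0)" using k0 by simp
    also have "\<dots> \<le> ennreal (norm (f x))"
    proof (cases "K \<le> k0")
      case False thus ?thesis unfolding d_def by simp
    next
      case True
      have k4: "4 \<le> k0" using True K by simp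
      have "norm x < 3/2^k0" using P_norm[OF k0] by simp
      also have "\<dots> \<le> 3/2^4" using k4 by (intro divide_left_mono power_increasing) auto
      finally have "x \<in> cball 0 1" by (simp add: dist_norm)
      hence nf: "norm (f x) = (\<bar>omega_plus \<alpha> x\<bar>)\<^sup>2 * norm (u_plus \<alpha> x)" unfolding f_def by simp
      have kk: "(2^k0)^2/(1080*pi*real k0) \<le> (\<bar>omega_plus \<alpha> x\<bar>)\<^sup>2 * norm (u_plus \<alpha> x)"
        using key_P[OF k0 k4 a0 a23] K(2) True by blast
      have dk: "d k0 = (2^k0)^2/(1080*pi*real k0)" using True by (simp add: d_def)
      show ?thesis unfolding nf dk by (rule ennreal_leI[OF kk])
    qed
    finally show ?thesis .
  qed
  have "(\<integral>\<^sup>+ x. (\<Sum>k. ennreal (d k) * indicator (P k) x) \<partial>lborel) = (\<Sum>k. \<integral>\<^sup>+ x. ennreal (d k) * indicator (P k) x \<partial>lborel)"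
    by (rule nn_integral_suminf) auto
  also have "\<dots> = (\<Sum>k. ennreal (if K \<le> k then (1/(1080*pi)) * inverse (real k) else 0))"
  proof (rule suminf_cong)
    fix k
    have "(\<integral>\<^sup>+ x. ennreal (d k) * indicator (P k) x \<partial>lborel) = ennreal (d k) * emeasure lborel (P k)"
      by (rule nn_integral_cmult_indicator) simp
    also have "\<dots> = ennreal (d k * (1/2^k)^2)" using d0 by (simp add: P_measure ennreal_mult)
    also have "d k * (1/2^k)^2 = (if K \<le> k then (1/(1080*pi)) * inverse (real k) else 0)"
      unfolding d_def by (simp add: field_simps)
    finally show "(\<integral>\<^sup>+ x. ennreal (d k) * indicator (P k) x \<partial>lborel) = ennreal (if K \<le> k then (1/(1080*pi)) * inverse (real k) else 0)" .
  qed
  also have "\<dots> = \<infinity>"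
  proof (rule ccontr)
    assume "(\<Sum>k. ennreal (if K \<le> k then (1/(1080*pi)) * inverse (real k) else 0)) \<noteq> \<infinity>"
    hence "summable (\<lambda>k. if K \<le> k then (1/(1080*pi)) * inverse (real k) else 0)"
      by (intro summable_suminf_not_top) auto
    thus False using not_summable_tail[of "1/(1080*pi)" K] by simp
  qed
  finally have eqinf: "(\<integral>\<^sup>+ x. (\<Sum>k. ennreal (d k) * indicator (P k) x) \<partial>lborel) = \<infinity>" .
  have "(\<integral>\<^sup>+ x. (\<Sum>k. ennreal (d k) * indicator (P k) x) \<partial>lborel) \<le> (\<integral>\<^sup>+ x. ennreal (norm (f x)) \<partial>lborel)"
    by (rule nn_integral_mono) (rule pt)
  thus False using fin eqinf by simp
qed


theorem theorem5p3:
  fixes \<alpha> :: real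
  assumes "1/2 < \<alpha>" and "\<alpha> < 1"
  shows "(\<forall>M::real. \<exists>x. integrable lborel (\<lambda>y. omega_plus \<alpha> y *\<^sub>R BS_kernel (x - y))
                        \<and> norm (u_plus \<alpha> x) > M)
     \<and> (\<alpha> \<le> 2/3 \<longrightarrow>
          (\<exists>C. compact C \<and>
               \<not> set_integrable lborel C (\<lambda>x. (\<bar>omega_plus \<alpha> x\<bar>)\<^sup>2 *\<^sub>R u_plus \<alpha> x)))"
proof -
  have a0: "0 \<le> \<alpha>" using assms(1) by simp
  show ?thesis
  proof (intro conjI allI impI)
    fix M :: real
    show "\<exists>x. integrable lborel (\<lambda>y. omega_plus \<alpha> y *\<^sub>R BS_kernel (x - y)) \<and> norm (u_plus \<alpha> x) > M"
      by (rule part1[OF a0 assms(2)])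
  next
    assume "\<alpha> \<le> 2/3"
    thus "\<exists>C. compact C \<and> \<not> set_integrable lborel C (\<lambda>x. (\<bar>omega_plus \<alpha> x\<bar>)\<^sup>2 *\<^sub>R u_plus \<alpha> x)"
      using part2[OF a0 assms(2)] by (intro exI[of _ "cball 0 1"]) auto
  qed
qed

end
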